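(* Let $\mathcal I$ be an admissible analytic $P$-ideal on $\mathbb N$. If $A\in\mathcal{I}\mathcal{A}$ and $G$ is the subgroup of $\mathbb T$ generated by $A$, then $G\in\mathcal{I}\mathcal{A}$.
   Context: $\mathbb T=\mathbb R/\mathbb Z$ identified with $[0,1]$ (0 and 1 identified), with addition mod 1; $\|x\|$ is the distance from $x$ to the nearest integer. An ideal $\mathcal I$ on $\mathbb N$ is a nonempty family of subsets of $\mathbb N$ closed under finite unions and subsets with $\mathbb N\notin\mathcal I$; admissible means all singletons belong to it; $P$-ideal means for every sequence $(A_n)$ in $\mathcal I$ there is $A\in\mathcal I$ with $A_n\setminus A$ finite for all $n$; analytic means analytic as a subset of $2^{\mathbb N}$. A sequence $(x_n)$ $\mathcal I$-converges to $x$ if for every open $U\ni x$, $\{n:x_n\notin U\}\in\mathcal I$. A set $X\subseteq[0,1]$ is $\mathcal I$-Arbault if there is an increasing sequence of naturals $(a_n)$ such that $\|a_nx\|$ $\mathcal I$-converges to $0$ for every $x\in X$; $\mathcal{I}\mathcal{A}$ denotes the family of all such sets. *)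

theory Defs
  imports "HOL-Analysis.Analysis"
begin

definition is_ideal :: "nat set set \<Rightarrow> bool" where
  "is_ideal I \<longleftrightarrow> I \<noteq> {} \<and> (\<forall>A\<in>I. \<forall>B\<in>I. A \<union> B \<in> I)
      \<and> (\<forall>A\<in>I. \<forall>B. B \<subseteq> A \<longrightarrow> B \<in> I) \<and> UNIV \<notin> I"

definition admissible_ideal :: "nat set set \<Rightarrow> bool" where
  "admissible_ideal I \<longleftrightarrow> (\<forall>n. {n} \<in> I)"

definition P_ideal :: "nat set set \<Rightarrow> bool" where
  "P_ideal I \<longleftrightarrow> (\<forall>As :: nat \<Rightarrow> nat set. (\<forall>n. As n \<in> I) \<longrightarrow>
      (\<exists>A\<in>I. \<forall>n. finite (As n - A)))"

definition analytic_set :: "'a::topological_space set \<Rightarrow> bool" where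
  "analytic_set S \<longleftrightarrow> S = {} \<or>
     (\<exists>f :: (nat \<Rightarrow> nat) \<Rightarrow> 'a. continuous_on UNIV f \<and> range f = S)"

text \<open>An ideal is analytic if it is analytic as a subset of the Cantor space 2^N,
  subsets of N being identified with their characteristic functions nat => bool.\<close>
definition analytic_ideal :: "nat set set \<Rightarrow> bool" where
  "analytic_ideal I \<longleftrightarrow> analytic_set ((\<lambda>A. (\<lambda>n. n \<in> A)) ` I)"

definition I_convergent :: "nat set set \<Rightarrow> (nat \<Rightarrow> 'a::topological_space) \<Rightarrow> 'a \<Rightarrow> bool" where
  "I_convergent I x l \<longleftrightarrow> (\<forall>U. open U \<and> l \<in> U \<longrightarrow> {n. x n \<notin> U} \<in> I)"

definition dist_int :: "real \<Rightarrow> real" where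
  "dist_int x = \<bar>x - of_int (round x)\<bar>"

definition I_Arbault :: "nat set set \<Rightarrow> real set \<Rightarrow> bool" where
  "I_Arbault I X \<longleftrightarrow> X \<subseteq> {0..1} \<and>
     (\<exists>a :: nat \<Rightarrow> nat. strict_mono a \<and>
        (\<forall>x\<in>X. I_convergent I (\<lambda>n. dist_int (real (a n) * x)) 0))"

text \<open>Subgroup of T = R/Z generated by A, viewed as a subset of [0,1]
  (with 0 and 1 identified): all points of [0,1] congruent mod 1 to a finite
  integer combination of elements of A.\<close>
definition T_subgroup_generated :: "real set \<Rightarrow> real set" where
  "T_subgroup_generated A = {x \<in> {0..1}. \<exists>S k. finite S \<and> S \<subseteq> A \<and>
       x - (\<Sum>s\<in>S. of_int (k s) * s) \<in> \<int>}"

end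

theory Submission
  imports Defs
begin

lemma dist_int_le: "dist_int z \<le> \<bar>z - of_int m\<bar>"
  unfolding dist_int_def by (rule round_diff_minimal)

lemma dist_int_nonneg: "dist_int z \<ge> 0"
  unfolding dist_int_def by simp

lemma ideal_empty: "is_ideal I \<Longrightarrow> {} \<in> I"
  unfolding is_ideal_def by blast

lemma ideal_UN:
  assumes "is_ideal I" "finite S" "\<forall>s\<in>S. B s \<in> I"
  shows "(\<Union>s\<in>S. B s) \<in> I"
  using assms(2,3)
proof (induction S rule: finite_induct)
  case empty then show ?case using ideal_empty[OF assms(1)] by simp
next
  case (insert x F)
  then show ?case using assms(1) unfolding is_ideal_def by simp
qed

lemma ideal_subset: "is_ideal I \<Longrightarrow> A \<in> I \<Longrightarrow> B \<subseteq> A \<Longrightarrow> B \<in> I"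
  unfolding is_ideal_def by blast

lemma conv_iff:
  assumes "is_ideal I"
  shows "I_convergent I (\<lambda>n. dist_int (f n)) 0 \<longleftrightarrow>
         (\<forall>e>0. {n. dist_int (f n) \<ge> e} \<in> I)"
proof
  assume H: "I_convergent I (\<lambda>n. dist_int (f n)) 0"
  show "\<forall>e>0. {n. dist_int (f n) \<ge> e} \<in> I"
  proof (intro allI impI)
    fix e :: real assume "e > 0"
    have "open {y::real. y < e}" using open_lessThan[of e] by (simp add: lessThan_def)
    moreover have "(0::real) \<in> {y. y < e}" using \<open>e>0\<close> by simp
    ultimately have "{n. dist_int (f n) \<notin> {y. y < e}} \<in> I"
      using H unfolding I_convergent_def by blast
    moreover have "{n. dist_int (f n) \<notin> {y. y < e}} = {n. dist_int (f n) \<ge> e}" by auto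
    ultimately show "{n. dist_int (f n) \<ge> e} \<in> I" by simp
  qed
next
  assume H: "\<forall>e>0. {n. dist_int (f n) \<ge> e} \<in> I"
  show "I_convergent I (\<lambda>n. dist_int (f n)) 0"
    unfolding I_convergent_def
  proof (intro allI impI)
    fix U :: "real set" assume "open U \<and> 0 \<in> U"
    then obtain e where e: "e > 0" "ball 0 e \<subseteq> U" using open_contains_ball by blast
    have "{n. dist_int (f n) \<notin> U} \<subseteq> {n. dist_int (f n) \<ge> e}"
    proof
      fix n assume "n \<in> {n. dist_int (f n) \<notin> U}"
      then have "dist_int (f n) \<notin> ball 0 e" using e by blast
      then show "n \<in> {n. dist_int (f n) \<ge> e}" using dist_int_nonneg[of "f n"] by (auto simp: dist_real_def)
    qed
    then show "{n. dist_int (f n) \<notin> U} \<in> I" using ideal_subset[OF assms] H e(1) by blast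
  qed
qed

theorem proposition3p4:
  fixes I :: "nat set set" and A :: "real set"
  assumes "is_ideal I" and "admissible_ideal I" and "analytic_ideal I" and "P_ideal I"
    and "I_Arbault I A"
  shows "I_Arbault I (T_subgroup_generated A)"
proof -
  obtain a where a: "strict_mono a" "\<forall>x\<in>A. I_convergent I (\<lambda>n. dist_int (real (a n) * x)) 0"
    using assms(5) unfolding I_Arbault_def by blast
  have aA: "\<forall>e>0. {n. dist_int (real (a n) * s) \<ge> e} \<in> I" if "s \<in> A" for s
    using a(2) that conv_iff[OF assms(1), of "\<lambda>n. real (a n) * s"] by blast
  have "\<forall>x\<in>T_subgroup_generated A. I_convergent I (\<lambda>n. dist_int (real (a n) * x)) 0"
  proof
    fix x assume "x \<in> T_subgroup_generated A"
    then obtain S k where S: "finite S" "S \<subseteq> A" "x - (\<Sum>s\<in>S. of_int (k s) * s) \<in> \<int>"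
      unfolding T_subgroup_generated_def by blast
    obtain m where m: "x - (\<Sum>s\<in>S. of_int (k s) * s) = of_int m" using S(3) Ints_cases by blast
    define K where "K = 1 + (\<Sum>s\<in>S. \<bar>real_of_int (k s)\<bar>)"
    have K0: "K > 0" "(\<Sum>s\<in>S. \<bar>real_of_int (k s)\<bar>) < K"
      unfolding K_def by (auto intro: sum_nonneg add_pos_nonneg)
    have bound: "dist_int (real (a n) * x) \<le> (\<Sum>s\<in>S. \<bar>real_of_int (k s)\<bar> * dist_int (real (a n) * s))" for n
    proof -
      let ?M = "int (a n) * m + (\<Sum>s\<in>S. k s * round (real (a n) * s))"
      have eq: "real (a n) * x - of_int ?M =
          (\<Sum>s\<in>S. of_int (k s) * (real (a n) * s - of_int (round (real (a n) * s))))"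
      proof -
        have "x = of_int m + (\<Sum>s\<in>S. of_int (k s) * s)" using m by simp
        then have "real (a n) * x = real (a n) * of_int m + (\<Sum>s\<in>S. of_int (k s) * (real (a n) * s))"
          by (simp add: algebra_simps sum_distrib_left)
        then show ?thesis
          by (simp add: algebra_simps sum_subtractf sum_distrib_left)
      qed
      have "dist_int (real (a n) * x) \<le> \<bar>real (a n) * x - of_int ?M\<bar>" by (rule dist_int_le)
      also have "\<dots> \<le> (\<Sum>s\<in>S. \<bar>of_int (k s) * (real (a n) * s - of_int (round (real (a n) * s)))\<bar>)"
        unfolding eq by (rule sum_abs)
      also have "\<dots> = (\<Sum>s\<in>S. \<bar>real_of_int (k s)\<bar> * dist_int (real (a n) * s))"
        by (simp add: abs_mult dist_int_def)
      finally show ?thesis .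
    qed
    have "\<forall>e>0. {n. dist_int (real (a n) * x) \<ge> e} \<in> I"
    proof (intro allI impI)
      fix e :: real assume e: "e > 0"
      have sub: "{n. dist_int (real (a n) * x) \<ge> e} \<subseteq> (\<Union>s\<in>S. {n. dist_int (real (a n) * s) \<ge> e / K})"
      proof
        fix n assume n: "n \<in> {n. dist_int (real (a n) * x) \<ge> e}"
        show "n \<in> (\<Union>s\<in>S. {n. dist_int (real (a n) * s) \<ge> e / K})"
        proof (rule ccontr)
          assume "\<not> ?thesis"
          then have lt: "\<forall>s\<in>S. dist_int (real (a n) * s) < e / K" by auto
          have "(\<Sum>s\<in>S. \<bar>real_of_int (k s)\<bar> * dist_int (real (a n) * s)) \<le> (\<Sum>s\<in>S. \<bar>real_of_int (k s)\<bar> * (e / K))"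
            proof (rule sum_mono)
              fix s assume "s \<in> S"
              then have "dist_int (real (a n) * s) \<le> e / K" using lt by (simp add: less_imp_le)
              then show "\<bar>real_of_int (k s)\<bar> * dist_int (real (a n) * s) \<le> \<bar>real_of_int (k s)\<bar> * (e / K)"
                by (rule mult_left_mono) simp
            qed
          also have "\<dots> = (\<Sum>s\<in>S. \<bar>real_of_int (k s)\<bar>) * (e / K)" by (rule sum_distrib_right[symmetric])
          also have "\<dots> < K * (e / K)" using K0 e by (intro mult_strict_right_mono) auto
          also have "\<dots> = e" using K0 by simp
          finally show False using bound[of n] n by simp
        qed
      qed
      have "(\<Union>s\<in>S. {n. dist_int (real (a n) * s) \<ge> e / K}) \<in> I"
        using ideal_UN[OF assms(1) S(1)] aA S(2) e K0 by (simp add: subset_iff)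
      then show "{n. dist_int (real (a n) * x) \<ge> e} \<in> I" using ideal_subset[OF assms(1)] sub by blast
    qed
    then show "I_convergent I (\<lambda>n. dist_int (real (a n) * x)) 0"
      using conv_iff[OF assms(1), of "\<lambda>n. real (a n) * x"] by blast
  qed
  moreover have "T_subgroup_generated A \<subseteq> {0..1}" unfolding T_subgroup_generated_def by blast
  ultimately show ?thesis unfolding I_Arbault_def using a(1) by blast
qed

end
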